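(* Let $R=(\mathbb{C},\mathbb{C}^4,\mathbb{C};u_0,\dots,u_3,v_0,\dots,v_3)$ be a representation of $\mathbf{Q}$ with dimension vector $(1,4,1)$. Then: (1) $R$ is globally injective if and only if $R$ has no subrepresentation of dimension vector $(1,b,1)$ with $b\in\{0,1,2,3\}$; (2) $R$ is globally surjective if and only if $R$ has no subrepresentation of dimension vector $(0,b,0)$ with $b\in\{1,2,3,4\}$.
   Context: The quiver $\mathbf{Q}$ has vertices $-1,0,1$, arrows $\eta_0,\dots,\eta_3:-1\to0$, $\phi_0,\dots,\phi_3:0\to1$ and relations $\phi_i\eta_j+\phi_j\eta_i=0$; a representation consists of vector spaces $V_{-1},V_0,V_1$ and linear maps $u_i:V_{-1}\to V_0$, $v_i:V_0\to V_1$ with $v_iu_j+v_ju_i=0$ for all $i,j$. $R$ is globally injective if $\sum_i\lambda_iu_i$ is injective for all $\lambda\in\mathbb{C}^4\setminus\{0\}$, and globally surjective if $\sum_i\lambda_iv_i$ is surjective for all $\lambda\in\mathbb{C}^4\setminus\{0\}$. *)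

theory Defs
  imports "HOL-Analysis.Analysis"
begin

text \<open>A representation of the quiver Q with dimension vector (1,4,1):
  V_{-1} = complex, V_0 = complex^4, V_1 = complex;
  u i : V_{-1} \<rightarrow> V_0 and v i : V_0 \<rightarrow> V_1 (i < 4) complex-linear maps with
  v_i u_j + v_j u_i = 0.\<close>

definition is_rep_141 :: "(nat \<Rightarrow> complex \<Rightarrow> complex^4) \<Rightarrow> (nat \<Rightarrow> complex^4 \<Rightarrow> complex) \<Rightarrow> bool" where
  "is_rep_141 u v \<longleftrightarrow>
     (\<forall>i<4. Vector_Spaces.linear ((*) :: complex \<Rightarrow> complex \<Rightarrow> complex) (*s) (u i)) \<and>
     (\<forall>i<4. Vector_Spaces.linear (*s) ((*) :: complex \<Rightarrow> complex \<Rightarrow> complex) (v i)) \<and>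
     (\<forall>i<4. \<forall>j<4. \<forall>t. v i (u j t) + v j (u i t) = 0)"

definition globally_injective :: "(nat \<Rightarrow> complex \<Rightarrow> complex^4) \<Rightarrow> bool" where
  "globally_injective u \<longleftrightarrow>
     (\<forall>lam :: nat \<Rightarrow> complex. (\<exists>i<4. lam i \<noteq> 0) \<longrightarrow>
        inj (\<lambda>t. \<Sum>i<4. lam i *s u i t))"

definition globally_surjective :: "(nat \<Rightarrow> complex^4 \<Rightarrow> complex) \<Rightarrow> bool" where
  "globally_surjective v \<longleftrightarrow>
     (\<forall>lam :: nat \<Rightarrow> complex. (\<exists>i<4. lam i \<noteq> 0) \<longrightarrow>
        surj (\<lambda>x. \<Sum>i<4. lam i * v i x))"

text \<open>Subrepresentation (W_{-1}, W_0, W_1) of dimension vector (a,b,c).\<close>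

definition has_subrep_dimvec ::
  "(nat \<Rightarrow> complex \<Rightarrow> complex^4) \<Rightarrow> (nat \<Rightarrow> complex^4 \<Rightarrow> complex) \<Rightarrow> nat \<Rightarrow> nat \<Rightarrow> nat \<Rightarrow> bool" where
  "has_subrep_dimvec u v a b c \<longleftrightarrow>
     (\<exists>(Wm :: complex set) (W0 :: (complex^4) set) (W1 :: complex set).
        vector_space_over_itself.subspace Wm \<and> vec.subspace W0 \<and>
        vector_space_over_itself.subspace W1 \<and>
        vector_space_over_itself.dim Wm = a \<and> vec.dim W0 = b \<and>
        vector_space_over_itself.dim W1 = c \<and>
        (\<forall>i<4. u i ` Wm \<subseteq> W0) \<and> (\<forall>i<4. v i ` W0 \<subseteq> W1))"

end

theory Submission
  imports Defs
begin

lemma det_nz_ker: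
  fixes A :: "complex^4^4"
  shows "det A \<noteq> 0 \<longleftrightarrow> (\<forall>y. A *v y = 0 \<longrightarrow> y = 0)"
proof -
  have lin: "Vector_Spaces.linear (*s) (*s) ((*v) A)" by simp
  have "det A \<noteq> 0 \<longleftrightarrow> inj ((*v) A)"
    using det_nz_iff_inj_gen[OF lin] by simp
  also have "\<dots> \<longleftrightarrow> (\<forall>y. A *v y = 0 \<longrightarrow> y = 0)"
    using vec.linear_inj_iff_eq_0[OF lin] by blast
  finally show ?thesis .
qed

definition hh :: "4 \<Rightarrow> nat" where
  "hh j = (if j = 1 then 0 else if j = 2 then 1 else if j = 3 then 2 else 3)"
definition hi :: "nat \<Rightarrow> 4" where "hi i = of_nat (i+1)"

lemma hh_hi: "i < 4 \<Longrightarrow> hh (hi i) = i"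
  by (auto simp: hh_def hi_def less_Suc_eq numeral_eq_Suc)

lemma hi_hh: "hi (hh j) = j"
  using exhaust_4[of j] by (auto simp: hh_def hi_def)

lemma hh_lt: "hh j < 4" by (simp add: hh_def)

lemma sum_hh: "(\<Sum>i<4. f i) = (\<Sum>j\<in>UNIV. f (hh j))"
  by (simp add: sum_4 hh_def numeral_eq_Suc lessThan_Suc ac_simps)

lemma dim_univ_c: "vector_space_over_itself.dim (UNIV :: complex set) = 1"
  by simp

lemma lin_u: "Vector_Spaces.linear ((*) :: complex \<Rightarrow> complex \<Rightarrow> complex) (*s) (f :: complex \<Rightarrow> complex^4) \<Longrightarrow> f t = t *s f 1"
  by (metis linear_iff_module_hom module_hom.scale mult.right_neutral)

lemma lin_v: "Vector_Spaces.linear (*s) ((*) :: complex \<Rightarrow> complex \<Rightarrow> complex) (f :: complex^4 \<Rightarrow> complex) \<Longrightarrow> f x = (\<Sum>k\<in>UNIV. x$k * f (axis k 1))"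
proof -
  assume l: "Vector_Spaces.linear (*s) ((*) :: complex \<Rightarrow> complex \<Rightarrow> complex) f"
  have "f x = f (\<Sum>k\<in>UNIV. x$k *s axis k 1)" by (simp add: basis_expansion)
  also have "\<dots> = (\<Sum>k\<in>UNIV. x$k * f (axis k 1))"
    by (simp add: module_hom.sum[OF l[unfolded linear_iff_module_hom]] module_hom.scale[OF l[unfolded linear_iff_module_hom]])
  finally show ?thesis .
qed

lemma dim4: "vec.dim (UNIV :: (complex^4) set) = 4" by (rule trans[OF vec_dim_card]) simp

lemma dim_lt4:
  fixes W :: "(complex^4) set"
  assumes "vec.subspace W" "W \<noteq> UNIV"
  shows "vec.dim W < 4"
proof -
  have "vec.dim W \<le> 4" using dim_subset_UNIV_cart_gen[of W] by simp
  moreover have "vec.dim W \<noteq> 4"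
  proof
    assume "vec.dim W = 4"
    moreover have "vec.dim (UNIV :: (complex^4) set) = 4" by (rule trans[OF vec_dim_card]) simp
    ultimately have "vec.dim (UNIV :: (complex^4) set) \<le> vec.dim W" by simp
    hence "W = UNIV" using vec.subspace_dim_equal[OF assms(1) vec.subspace_UNIV] by blast
    thus False using assms by blast
  qed
  ultimately show ?thesis by simp
qed

lemma part1:
  assumes "is_rep_141 u v"
  shows "globally_injective u \<longleftrightarrow> \<not> (\<exists>b\<in>{0..3}. has_subrep_dimvec u v 1 b 1)"
proof -
  define a where "a i = u i 1" for i
  have ua: "u i t = t *s a i" if "i < 4" for i t
    using assms that lin_u unfolding is_rep_141_def a_def by blast
  define A :: "complex^4^4" where "A = (\<chi> k j. a (hh j) $ k)"
  have colA: "column j A = a (hh j)" for j by (simp add: A_def column_def vec_eq_iff)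
  have Av: "A *v y = (\<Sum>j\<in>UNIV. y$j *s a (hh j))" for y
    by (simp add: matrix_mult_sum colA)
  have s1: "(\<Sum>i<4. lam i *s u i t) = t *s (\<Sum>i<4. lam i *s a i)" for lam t
    by (simp add: ua vec.scale_sum_right vector_smult_assoc mult.commute)
  have injc: "inj (\<lambda>t::complex. t *s c) \<longleftrightarrow> c \<noteq> 0" for c :: "complex^4"
  proof
    assume "inj (\<lambda>t::complex. t *s c)"
    then show "c \<noteq> 0" by (metis (no_types, lifting) injD vector_smult_lzero vector_smult_rzero zero_neq_one)
  next
    assume "c \<noteq> 0"
    then show "inj (\<lambda>t::complex. t *s c)"
      by (metis (no_types, lifting) injI vec.scale_right_imp_eq)
  qed
  have GI: "globally_injective u \<longleftrightarrow> (\<forall>y. A *v y = 0 \<longrightarrow> y = 0)"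
  proof
    assume g: "globally_injective u"
    show "\<forall>y. A *v y = 0 \<longrightarrow> y = 0"
    proof (intro allI impI, rule ccontr)
      fix y assume y0: "A *v y = 0" and yn: "y \<noteq> 0"
      define lam where "lam i = y $ hi i" for i
      obtain j where "y $ j \<noteq> 0" using yn by (metis vec_eq_iff zero_index)
      hence "\<exists>i<4. lam i \<noteq> 0" using hh_lt hi_hh unfolding lam_def by metis
      hence "inj (\<lambda>t. \<Sum>i<4. lam i *s u i t)" using g unfolding globally_injective_def by blast
      hence "(\<Sum>i<4. lam i *s a i) \<noteq> 0" using injc s1 by simp
      moreover have "(\<Sum>i<4. lam i *s a i) = A *v y"
        unfolding Av sum_hh lam_def hi_hh ..
      ultimately show False using y0 by simp
    qed
  next
    assume k: "\<forall>y. A *v y = 0 \<longrightarrow> y = 0"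
    show "globally_injective u" unfolding globally_injective_def
    proof (intro allI impI)
      fix lam :: "nat \<Rightarrow> complex" assume "\<exists>i<4. lam i \<noteq> 0"
      then obtain i where i: "i < 4" "lam i \<noteq> 0" by blast
      define y where "y = (\<chi> j. lam (hh j))"
      have "y $ hi i \<noteq> 0" using i hh_hi by (simp add: y_def)
      hence "y \<noteq> 0" by auto
      hence "A *v y \<noteq> 0" using k by blast
      moreover have "(\<Sum>i<4. lam i *s a i) = A *v y"
        unfolding Av sum_hh y_def by simp
      ultimately show "inj (\<lambda>t. \<Sum>i<4. lam i *s u i t)" using injc s1 by simp
    qed
  qed
  also have "\<dots> \<longleftrightarrow> det A \<noteq> 0" using det_nz_ker by blast
  also have "\<dots> \<longleftrightarrow> \<not> (\<exists>b\<in>{0..3}. has_subrep_dimvec u v 1 b 1)"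
  proof
    assume d: "det A \<noteq> 0"
    show "\<not> (\<exists>b\<in>{0..3}. has_subrep_dimvec u v 1 b 1)"
    proof
      assume "\<exists>b\<in>{0..3}. has_subrep_dimvec u v 1 b 1"
      then obtain b Wm W0 W1 where b: "b \<le> 3" and sW0: "vec.subspace W0"
        and dWm: "vector_space_over_itself.dim Wm = 1" and dW0: "vec.dim W0 = b"
        and uW: "\<forall>i<4. u i ` Wm \<subseteq> W0"
        unfolding has_subrep_dimvec_def by auto
      have "\<not> Wm \<subseteq> {0}"
      proof
        assume "Wm \<subseteq> {0}"
        hence "vector_space_over_itself.dim Wm = 0" by (simp only: vector_space_over_itself.dim_eq_0)
        thus False using dWm by simp
      qed
      then obtain t where t: "t \<in> Wm" "t \<noteq> 0" by blast
      have aW: "a (hh j) \<in> W0" for j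
      proof -
        have "u (hh j) t \<in> W0" using uW t hh_lt by blast
        hence "t *s a (hh j) \<in> W0" using ua hh_lt by metis
        hence "(1/t) *s (t *s a (hh j)) \<in> W0" using sW0 vec.subspace_scale by blast
        thus ?thesis using t by (simp add: vector_smult_assoc)
      qed
      have "inj ((*v) A)" using d det_nz_ker vec.linear_inj_iff_eq_0[OF matrix_vector_mul_linear_gen] by blast
      hence "surj ((*v) A)" using vec.linear_injective_imp_surjective[OF matrix_vector_mul_linear_gen] by blast
      have "x \<in> W0" for x
      proof -
        obtain y where "x = A *v y" using \<open>surj ((*v) A)\<close> by (metis surjD)
        thus ?thesis unfolding Av using sW0 aW vec.subspace_sum vec.subspace_scale by (metis (no_types, lifting))
      qed
      hence "W0 = UNIV" by blast
      hence "vec.dim W0 = 4" using dim4 by simp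
      thus False using dW0 b by simp
    qed
  next
    assume nex: "\<not> (\<exists>b\<in>{0..3}. has_subrep_dimvec u v 1 b 1)"
    show "det A \<noteq> 0"
    proof
    assume "det A = 0"
    hence "det (transpose A) = 0" by simp
    then obtain y where y0: "transpose A *v y = 0" and yn: "y \<noteq> 0" using det_nz_ker by blast
    define W where "W = {x :: complex^4. (\<Sum>k\<in>UNIV. y$k * x$k) = 0}"
    have sW: "vec.subspace W" unfolding vec.subspace_def W_def
    proof (intro conjI ballI allI)
      fix x z assume "x \<in> {x. (\<Sum>k\<in>UNIV. y $ k * x $ k) = 0}" "z \<in> {x. (\<Sum>k\<in>UNIV. y $ k * x $ k) = 0}"
      thus "x + z \<in> {x. (\<Sum>k\<in>UNIV. y $ k * x $ k) = 0}" by (simp add: distrib_left sum.distrib)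
    next
      fix c :: complex and x assume "x \<in> {x. (\<Sum>k\<in>UNIV. y $ k * x $ k) = 0}"
      hence "c * (\<Sum>k\<in>UNIV. y $ k * x $ k) = 0" by simp
      thus "c *s x \<in> {x. (\<Sum>k\<in>UNIV. y $ k * x $ k) = 0}" by (simp add: sum_distrib_left mult.left_commute)
    qed simp
    obtain k where k: "y $ k \<noteq> 0" using yn by (metis vec_eq_iff zero_index)
    have "axis k 1 \<notin> W" using k by (simp add: W_def axis_def if_distrib sum.delta cong: if_cong)
    hence WU: "W \<noteq> UNIV" by blast
    have aW: "a i \<in> W" if "i < 4" for i
    proof -
      have "(transpose A *v y) $ (hi i) = 0" using y0 by simp
      thus ?thesis using that hh_hi
        by (simp add: W_def A_def transpose_def matrix_vector_mult_def mult.commute)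
    qed
    have "has_subrep_dimvec u v 1 (vec.dim W) 1"
      unfolding has_subrep_dimvec_def
    proof (rule exI[of _ UNIV], rule exI[of _ W], rule exI[of _ UNIV], intro conjI)
      show "\<forall>i<4. u i ` UNIV \<subseteq> W"
      proof (intro allI impI subsetI)
        fix i x assume i: "i < 4" and "x \<in> u i ` UNIV"
        then obtain t where "x = u i t" by blast
        hence "x = t *s a i" using ua i by simp
        thus "x \<in> W" using vec.subspace_scale[OF sW aW[OF i]] by simp
      qed
      show "vector_space_over_itself.dim (UNIV :: complex set) = 1" by (rule dim_univ_c)
    qed (simp_all add: sW vector_space_over_itself.subspace_UNIV)
    moreover have "vec.dim W \<in> {0..3}" using dim_lt4[OF sW WU] by simp
    ultimately show False using nex by blast
    qed
  qed
  finally show ?thesis .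
qed
lemma axis_sum: "(\<Sum>k'\<in>UNIV. (s *s axis k 1) $ k' * (w::complex^4) $ k') = s * w $ k"
proof -
  have "(\<Sum>k'\<in>UNIV. (s *s axis k 1) $ k' * w $ k') = (\<Sum>k'\<in>UNIV. if k' = k then s * w $ k else 0)"
    by (rule sum.cong) (auto simp: axis_def)
  thus ?thesis by simp
qed

lemma part2:
  assumes "is_rep_141 u v"
  shows "globally_surjective v \<longleftrightarrow> \<not> (\<exists>b\<in>{1..4}. has_subrep_dimvec u v 0 b 0)"
proof -
  have linv: "Vector_Spaces.linear (*s) ((*) :: complex \<Rightarrow> complex \<Rightarrow> complex) (v i)" if "i < 4" for i
    using assms that unfolding is_rep_141_def by blast
  have linu: "Vector_Spaces.linear ((*) :: complex \<Rightarrow> complex \<Rightarrow> complex) (*s) (u i)" if "i < 4" for i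
    using assms that unfolding is_rep_141_def by blast
  define M :: "complex^4^4" where "M = (\<chi> i k. v (hh i) (axis k 1))"
  define N where "N = transpose M"
  have vM: "v j x = (M *v x) $ hi j" if "j < 4" for j x
  proof -
    have "(M *v x) $ hi j = (\<Sum>k\<in>UNIV. v j (axis k 1) * x$k)"
      by (simp add: M_def matrix_vector_mult_def hh_hi[OF that])
    also have "\<dots> = (\<Sum>k\<in>UNIV. x$k * v j (axis k 1))" by (simp add: mult.commute)
    also have "\<dots> = v j x" by (rule lin_v[OF linv[OF that], symmetric])
    finally show ?thesis by simp
  qed
  have ident: "(\<Sum>i<4. y $ hi i * v i x) = (\<Sum>k\<in>UNIV. x$k * (N *v y)$k)" for y x
  proof -
    have "(\<Sum>i<4. y $ hi i * v i x) = (\<Sum>j\<in>UNIV. y $ j * v (hh j) x)"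
      unfolding sum_hh hi_hh ..
    also have "\<dots> = (\<Sum>j\<in>UNIV. y $ j * (\<Sum>k\<in>UNIV. x$k * v (hh j) (axis k 1)))"
    proof -
      have "v (hh j) x = (\<Sum>k\<in>UNIV. x$k * v (hh j) (axis k 1))" for j by (rule lin_v[OF linv[OF hh_lt]])
      thus ?thesis by (simp only:)
    qed
    also have "\<dots> = (\<Sum>k\<in>UNIV. x$k * (\<Sum>j\<in>UNIV. v (hh j) (axis k 1) * y $ j))"
      unfolding sum_distrib_left by (subst sum.swap) (simp add: mult_ac)
    also have "\<dots> = (\<Sum>k\<in>UNIV. x$k * (N *v y)$k)"
      by (simp add: N_def M_def transpose_def matrix_vector_mult_def)
    finally show ?thesis .
  qed
  have GS: "globally_surjective v \<longleftrightarrow> (\<forall>y. N *v y = 0 \<longrightarrow> y = 0)"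
  proof
    assume g: "globally_surjective v"
    show "\<forall>y. N *v y = 0 \<longrightarrow> y = 0"
    proof (intro allI impI, rule ccontr)
      fix y assume y0: "N *v y = 0" and yn: "y \<noteq> 0"
      define lam where "lam i = y $ hi i" for i
      obtain j where "y $ j \<noteq> 0" using yn by (metis vec_eq_iff zero_index)
      hence "\<exists>i<4. lam i \<noteq> 0" using hh_lt hi_hh unfolding lam_def by metis
      hence "surj (\<lambda>x. \<Sum>i<4. lam i * v i x)" using g unfolding globally_surjective_def by blast
      hence "\<exists>x0. (1::complex) = (\<Sum>i<4. lam i * v i x0)" unfolding surj_def by blast
      then obtain x0 where x0: "(1::complex) = (\<Sum>i<4. lam i * v i x0)" by blast
      have "(\<Sum>i<4. lam i * v i x) = 0" for x
        unfolding lam_def ident y0 by simp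
      thus False using x0 by simp
    qed
  next
    assume k: "\<forall>y. N *v y = 0 \<longrightarrow> y = 0"
    show "globally_surjective v" unfolding globally_surjective_def
    proof (intro allI impI)
      fix lam :: "nat \<Rightarrow> complex" assume "\<exists>i<4. lam i \<noteq> 0"
      then obtain i where i: "i < 4" "lam i \<noteq> 0" by blast
      define y where "y = (\<chi> j. lam (hh j))"
      have "y $ hi i \<noteq> 0" using i hh_hi by (simp add: y_def)
      hence "y \<noteq> 0" by auto
      hence "N *v y \<noteq> 0" using k by blast
      then obtain k where c: "(N *v y) $ k \<noteq> 0" by (metis vec_eq_iff zero_index)
      have f: "(\<Sum>i<4. lam i * v i x) = (\<Sum>k\<in>UNIV. x$k * (N *v y)$k)" for x
      proof -
        have "(\<Sum>i<4. lam i * v i x) = (\<Sum>i<4. y $ hi i * v i x)"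
          by (rule sum.cong) (simp_all add: y_def hh_hi)
        thus ?thesis using ident by simp
      qed
      show "surj (\<lambda>x. \<Sum>i<4. lam i * v i x)"
      proof (rule surjI)
        fix z
        show "(\<Sum>i<4. lam i * v i ((z / (N *v y) $ k) *s axis k 1)) = z"
          unfolding f axis_sum using c by simp
      qed
    qed
  qed
  also have "\<dots> \<longleftrightarrow> det N \<noteq> 0" using det_nz_ker by blast
  also have "\<dots> \<longleftrightarrow> det M \<noteq> 0" by (simp add: N_def)
  also have "\<dots> \<longleftrightarrow> (\<forall>x. M *v x = 0 \<longrightarrow> x = 0)" using det_nz_ker by blast
  also have "\<dots> \<longleftrightarrow> (\<forall>x. (\<forall>i<4. v i x = 0) \<longrightarrow> x = 0)"
  proof -
    have "M *v x = 0 \<longleftrightarrow> (\<forall>i<4. v i x = 0)" for x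
    proof
      assume "M *v x = 0" thus "\<forall>i<4. v i x = 0" using vM by simp
    next
      assume a: "\<forall>i<4. v i x = 0"
      have "(M *v x) $ j = 0" for j
      proof -
        have "v (hh j) x = (M *v x) $ hi (hh j)" by (rule vM[OF hh_lt])
        hence "(M *v x) $ j = v (hh j) x" by (simp only: hi_hh)
        thus ?thesis using a hh_lt by simp
      qed
      thus "M *v x = 0" by (simp add: vec_eq_iff)
    qed
    thus ?thesis by simp
  qed
  also have "\<dots> \<longleftrightarrow> \<not> (\<exists>b\<in>{1..4}. has_subrep_dimvec u v 0 b 0)"
  proof
    assume k: "\<forall>x. (\<forall>i<4. v i x = 0) \<longrightarrow> x = 0"
    show "\<not> (\<exists>b\<in>{1..4}. has_subrep_dimvec u v 0 b 0)"
    proof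
      assume "\<exists>b\<in>{1..4}. has_subrep_dimvec u v 0 b 0"
      then obtain b Wm W0 W1 where b: "1 \<le> b" 
        and dW1: "vector_space_over_itself.dim W1 = 0" and dW0: "vec.dim W0 = b"
        and vW: "\<forall>i<4. v i ` W0 \<subseteq> W1"
        unfolding has_subrep_dimvec_def by auto
      have W1: "W1 \<subseteq> {0}" using dW1 by (simp only: vector_space_over_itself.dim_eq_0)
      have "\<not> W0 \<subseteq> {0}"
      proof
        assume "W0 \<subseteq> {0}"
        hence "vec.dim W0 = 0" by (simp only: vec.dim_eq_0)
        thus False using dW0 b by simp
      qed
      then obtain x where x: "x \<in> W0" "x \<noteq> 0" by blast
      have "\<forall>i<4. v i x = 0" using vW W1 x(1) by blast
      thus False using k x(2) by blast
    qed
  next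
    assume nex: "\<not> (\<exists>b\<in>{1..4}. has_subrep_dimvec u v 0 b 0)"
    show "\<forall>x. (\<forall>i<4. v i x = 0) \<longrightarrow> x = 0"
    proof (intro allI impI, rule ccontr)
      fix x assume vx: "\<forall>i<4. v i x = 0" and xn: "x \<noteq> 0"
      have "has_subrep_dimvec u v 0 1 0"
        unfolding has_subrep_dimvec_def
      proof (rule exI[of _ "{0}"], rule exI[of _ "vec.span {x}"], rule exI[of _ "{0}"], intro conjI)
        show "\<forall>i<4. u i ` {0} \<subseteq> vec.span {x}"
        proof (intro allI impI)
          fix i :: nat assume i: "i < 4"
          have "u i 0 = 0 *s u i 1" by (rule lin_u[OF linu[OF i]])
          hence "u i 0 = 0" by simp
          thus "u i ` {0} \<subseteq> vec.span {x}" by (simp add: vec.span_zero)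
        qed
        show "\<forall>i<4. v i ` vec.span {x} \<subseteq> {0}"
        proof (intro allI impI subsetI)
          fix i z assume i: "i < 4" and "z \<in> v i ` vec.span {x}"
          then obtain c where "z = v i (c *s x)" by (auto simp: vec.span_singleton)
          hence "z = c * v i x" using module_hom.scale[OF linv[OF i, unfolded linear_iff_module_hom]] by simp
          thus "z \<in> {0}" using vx i by simp
        qed
        show "vec.dim (vec.span {x}) = 1" using xn by simp
      qed (simp_all add: vector_space_over_itself.subspace_single_0)
      thus False using nex by force
    qed
  qed
  finally show ?thesis .
qed

theorem mainTheorem8:
  fixes u :: "nat \<Rightarrow> complex \<Rightarrow> complex^4" and v :: "nat \<Rightarrow> complex^4 \<Rightarrow> complex"
  assumes "is_rep_141 u v"
  shows "(globally_injective u \<longleftrightarrow> \<not> (\<exists>b\<in>{0..3}. has_subrep_dimvec u v 1 b 1)) \<and>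
         (globally_surjective v \<longleftrightarrow> \<not> (\<exists>b\<in>{1..4}. has_subrep_dimvec u v 0 b 0))"
  using part1[OF assms] part2[OF assms] by blast

end
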